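(* Let $\mathcal{I}\subseteq\mathcal{M}_m$ be decreasing, $r=\max_{u\in\mathcal{I}}\deg(u)$, and $f,g\in\mathcal{I}_r$. Suppose that either (1) the two largest indices in $\operatorname{ind}\bigl(fg/\gcd(f,g)\bigr)$ both belong to $\operatorname{ind}(f)$, or both belong to $\operatorname{ind}(g)$; or (2) $\deg(\gcd(f,g))<r-2$. Then $$\bigl|\mathrm{LTA}(m,2)\cdot f+\mathrm{LTA}(m,2)\cdot g\bigr|=\bigl|\mathrm{LTA}(m,2)\cdot f\bigr|\cdot\bigl|\mathrm{LTA}(m,2)\cdot g\bigr|.$$
   Context: $\mathcal{M}_m$ is the set of square-free monomials in $x_0,\dots,x_{m-1}$ (in $\mathbf{R}_m=\mathbb{F}_2[x_0,\dots,x_{m-1}]/(x_i^2-x_i)$). For a monomial $f$, $\operatorname{ind}(f)$ is its set of variable indices, $\deg f=|\operatorname{ind} f|$; $fg$ has index set $\operatorname{ind}(f)\cup\operatorname{ind}(g)$, $\gcd(f,g)$ has index set $\operatorname{ind}(f)\cap\operatorname{ind}(g)$. Decreasing sets: $f\preceq_w g$ iff $f\mid g$; for equal degree $f=x_{i_1}\cdots x_{i_s}$, $g=x_{j_1}\cdots x_{j_s}$ (increasing indices), $f\preceq_{sh} g$ iff $i_\ell\le j_\ell$ for all $\ell$; $f\preceq g$ iff $f\preceq_{sh}g^*\preceq_w g$ for some $g^*$; $\mathcal{I}$ is decreasing if $f\in\mathcal{I}$, $g\preceq f$ imply $g\in\mathcal{I}$; $\mathcal{I}_r$ is the set of degree-$r$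 elements of $\mathcal{I}$. $\mathrm{LTA}(m,2)$ is the group of pairs $(\mathbf{B},\varepsilon)$, $\mathbf{B}=(b_{i,j})$ binary lower triangular $m\times m$ with unit diagonal, $\varepsilon\in\mathbb{F}_2^m$, acting on a monomial $u$ by $x_i\mapsto x_i+\sum_{j<i}b_{i,j}x_j+\varepsilon_i$ for $i\in\operatorname{ind}(u)$; $\mathrm{LTA}(m,2)\cdot f$ is the orbit (a set of polynomials). $A+B=\{a+b: a\in A,b\in B\}$. *)

theory Defs
  imports Main
begin

text \<open>
  Elements of R_m = F_2[x_0..x_{m-1}]/(x_i^2 - x_i) are represented by their
  (unique) expansion as a sum of square-free monomials with coefficients in F_2:
  a polynomial is the finite set of monomials occurring with coefficient 1, and
  a square-free monomial is represented by its index set ind(u).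
\<close>

type_synonym monomial = "nat set"
type_synonym rpoly = "nat set set"

definition monomials :: "nat \<Rightarrow> monomial set" where
  "monomials m = Pow {..<m}"

definition Rm :: "nat \<Rightarrow> rpoly set" where
  "Rm m = Pow (monomials m)"

definition radd :: "rpoly \<Rightarrow> rpoly \<Rightarrow> rpoly" where
  "radd p q = (p - q) \<union> (q - p)"

text \<open>Product in R_m: monomials multiply by union of index sets (x_i^2 = x_i),
  coefficients are counted modulo 2.\<close>
definition rmul :: "rpoly \<Rightarrow> rpoly \<Rightarrow> rpoly" where
  "rmul p q = {S. odd (card {(A, B). A \<in> p \<and> B \<in> q \<and> A \<union> B = S})}"

definition rone :: rpoly where
  "rone = {{}}"

definition rprod_list :: "rpoly list \<Rightarrow> rpoly" where
  "rprod_list ps = foldr rmul ps rone"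

text \<open>LTA(m,2): pairs (B, eps); B is a binary lower triangular m x m matrix with
  unit diagonal, represented by its strictly-lower entries (B i j for j < i < m),
  eps a vector in F_2^m.\<close>
definition LTA :: "nat \<Rightarrow> ((nat \<Rightarrow> nat \<Rightarrow> bool) \<times> (nat \<Rightarrow> bool)) set" where
  "LTA m = {(B, eps). (\<forall>i j. B i j \<longrightarrow> j < i \<and> i < m) \<and> (\<forall>i. eps i \<longrightarrow> i < m)}"

definition lta_var :: "(nat \<Rightarrow> nat \<Rightarrow> bool) \<Rightarrow> (nat \<Rightarrow> bool) \<Rightarrow> nat \<Rightarrow> rpoly" where
  "lta_var B eps i = {{i}} \<union> {{j} | j. j < i \<and> B i j} \<union> (if eps i then {{}} else {})"

definition lta_act :: "(nat \<Rightarrow> nat \<Rightarrow> bool) \<times> (nat \<Rightarrow> bool) \<Rightarrow> monomial \<Rightarrow> rpoly" where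
  "lta_act Be u = rprod_list (map (lta_var (fst Be) (snd Be)) (sorted_list_of_set u))"

definition orbit :: "nat \<Rightarrow> monomial \<Rightarrow> rpoly set" where
  "orbit m u = (\<lambda>Be. lta_act Be u) ` LTA m"

definition sumset :: "rpoly set \<Rightarrow> rpoly set \<Rightarrow> rpoly set" where
  "sumset A B = {radd a b | a b. a \<in> A \<and> b \<in> B}"

definition weak_le :: "monomial \<Rightarrow> monomial \<Rightarrow> bool" where
  "weak_le f g \<longleftrightarrow> f \<subseteq> g"

definition shift_le :: "monomial \<Rightarrow> monomial \<Rightarrow> bool" where
  "shift_le f g \<longleftrightarrow> card f = card g \<and>
     (\<forall>l < card f. sorted_list_of_set f ! l \<le> sorted_list_of_set g ! l)"

definition mono_le :: "monomial \<Rightarrow> monomial \<Rightarrow> bool" where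
  "mono_le f g \<longleftrightarrow> (\<exists>g'. shift_le f g' \<and> weak_le g' g)"

definition decreasing :: "nat \<Rightarrow> monomial set \<Rightarrow> bool" where
  "decreasing m I \<longleftrightarrow> I \<subseteq> monomials m \<and>
     (\<forall>f \<in> I. \<forall>g \<in> monomials m. mono_le g f \<longrightarrow> g \<in> I)"

end

theory Submission
  imports Defs
begin


definition cf :: "(nat\<Rightarrow>nat\<Rightarrow>bool) \<Rightarrow> (nat\<Rightarrow>bool) \<Rightarrow> nat \<Rightarrow> nat set \<Rightarrow> bool" where
  "cf B e i X = (odd (card {j. j < i \<and> B i j \<and> j \<in> X}) = e i)"

definition T :: "nat \<Rightarrow> (nat\<Rightarrow>nat\<Rightarrow>bool) \<Rightarrow> (nat\<Rightarrow>bool) \<Rightarrow> nat set \<Rightarrow> nat set set" where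
  "T n B e u = {X. X \<subseteq> {..<n} \<and> (\<forall>i\<in>u. (i \<in> X) = cf B e i X)}"

definition sdiff :: "'a set \<Rightarrow> 'a set \<Rightarrow> 'a set" where
  "sdiff A B = (A - B) \<union> (B - A)"

lemma mem_sdiff[simp]: "x \<in> sdiff A B \<longleftrightarrow> (x \<in> A) \<noteq> (x \<in> B)"
  unfolding sdiff_def by auto

lemma T_sub: "X \<in> T n B e u \<Longrightarrow> X \<subseteq> {..<n}"
  unfolding T_def by auto

lemma cf_del: "i \<le> n \<Longrightarrow> cf B e i (X - {n}) = cf B e i X"
proof -
  assume "i \<le> n"
  then have "{j. j < i \<and> B i j \<and> j \<in> X - {n}} = {j. j < i \<and> B i j \<and> j \<in> X}" by auto
  then show ?thesis unfolding cf_def by simp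
qed

lemma cf_alt: "Y \<subseteq> {..<n} \<Longrightarrow> cf B e n Y = (odd (card ({j. j < n \<and> B n j} \<inter> Y)) = e n)"
proof -
  assume "Y \<subseteq> {..<n}"
  have "{j. j < n \<and> B n j \<and> j \<in> Y} = {j. j < n \<and> B n j} \<inter> Y" by auto
  then show ?thesis unfolding cf_def by simp
qed

lemma mem_lo:
  assumes "u \<subseteq> {..<Suc n}" "Y \<subseteq> {..<n}"
  shows "(Y \<in> T (Suc n) B e u) = (Y \<in> T n B e (u - {n}) \<and> (n \<in> u \<longrightarrow> \<not> cf B e n Y))"
proof -
  have nY: "n \<notin> Y" using assms(2) by auto
  have s1: "Y \<subseteq> {..<Suc n}" using assms(2) by auto
  have "(\<forall>i\<in>u. (i \<in> Y) = cf B e i Y) = ((\<forall>i\<in>u - {n}. (i \<in> Y) = cf B e i Y) \<and> (n \<in> u \<longrightarrow> \<not> cf B e n Y))"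
    using nY by blast
  then show ?thesis unfolding T_def using s1 assms(2) by simp
qed

lemma mem_hi:
  assumes "u \<subseteq> {..<Suc n}" "Y \<subseteq> {..<n}"
  shows "(insert n Y \<in> T (Suc n) B e u) = (Y \<in> T n B e (u - {n}) \<and> (n \<in> u \<longrightarrow> cf B e n Y))"
proof -
  have Y: "insert n Y - {n} = Y" using assms(2) by auto
  have c: "\<And>i. i \<in> u \<Longrightarrow> cf B e i (insert n Y) = cf B e i Y"
  proof -
    fix i assume "i \<in> u"
    then have "i \<le> n" using assms(1) by auto
    from cf_del[OF this, of B e "insert n Y"] show "cf B e i (insert n Y) = cf B e i Y" using Y by simp
  qed
  have nY: "n \<notin> Y" using assms(2) by auto
  have s1: "insert n Y \<subseteq> {..<Suc n}" using assms(2) by auto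
  have i: "\<And>i. i \<in> u - {n} \<Longrightarrow> (i \<in> insert n Y) = (i \<in> Y)" by auto
  have "(\<forall>i\<in>u. (i \<in> insert n Y) = cf B e i (insert n Y)) = ((\<forall>i\<in>u - {n}. (i \<in> Y) = cf B e i Y) \<and> (n \<in> u \<longrightarrow> cf B e n Y))"
    using c i by blast
  then show ?thesis unfolding T_def using s1 assms(2) by simp
qed

lemma split_pt:
  assumes "X \<subseteq> {..<Suc n}"
  shows "\<exists>Y. Y \<subseteq> {..<n} \<and> (X = Y \<or> X = insert n Y)"
  using assms by (intro exI[of _ "X - {n}"]) (auto simp: less_Suc_eq)

lemma T_cong: "(\<And>i. i \<in> u \<Longrightarrow> B i = B' i \<and> e i = e' i) \<Longrightarrow> T n B e u = T n B' e' u"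
  unfolding T_def cf_def by auto

lemma set_eq_split:
  assumes "\<And>X. X \<in> S1 \<Longrightarrow> X \<subseteq> {..<Suc n}" "\<And>X. X \<in> S2 \<Longrightarrow> X \<subseteq> {..<Suc n}"
    and "\<And>Y. Y \<subseteq> {..<n} \<Longrightarrow> (Y \<in> S1 \<longleftrightarrow> Y \<in> S2) \<and> (insert n Y \<in> S1 \<longleftrightarrow> insert n Y \<in> S2)"
  shows "S1 = S2"
proof (rule set_eqI)
  fix X
  show "X \<in> S1 \<longleftrightarrow> X \<in> S2"
  proof (cases "X \<subseteq> {..<Suc n}")
    case False
    then show ?thesis using assms(1,2) by blast
  next
    case True
    define Y where "Y = X - {n}"
    have Y: "Y \<subseteq> {..<n}" using True unfolding Y_def by (auto simp: less_Suc_eq)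
    have "X = Y \<or> X = insert n Y" unfolding Y_def by auto
    then show ?thesis using assms(3)[OF Y] by (elim disjE) simp_all
  qed
qed

lemma T_ext:
  assumes "u \<subseteq> {..<Suc n}" "Y \<in> T n B e (u - {n})"
  shows "(if n \<in> u \<and> cf B e n Y then insert n Y else Y) \<in> T (Suc n) B e u"
proof -
  have "Y \<subseteq> {..<n}" using assms(2) T_sub by blast
  then show ?thesis using mem_lo[OF assms(1) \<open>Y \<subseteq> {..<n}\<close>] mem_hi[OF assms(1) \<open>Y \<subseteq> {..<n}\<close>] assms(2)
    by auto
qed

lemma T_nonempty: "u \<subseteq> {..<n} \<Longrightarrow> T n B e u \<noteq> {}"
proof (induction n arbitrary: u)
  case 0
  then have "u = {}" by auto
  then have "{} \<in> T 0 B e u" unfolding T_def by auto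
  then show ?case by blast
next
  case (Suc n)
  have "u - {n} \<subseteq> {..<n}" using Suc.prems by auto
  then obtain Y where "Y \<in> T n B e (u - {n})" using Suc.IH by blast
  from T_ext[OF Suc.prems this] show ?case by blast
qed

lemma T_mono: "u \<subseteq> {..<n} \<Longrightarrow> v \<subseteq> {..<n} \<Longrightarrow> T n B e u \<subseteq> T n B' e' v \<Longrightarrow> v \<subseteq> u"
proof (induction n arbitrary: u v)
  case 0
  then show ?case by auto
next
  case (Suc n)
  have u0: "u - {n} \<subseteq> {..<n}" and v0: "v - {n} \<subseteq> {..<n}" using Suc.prems by auto
  have "T n B e (u - {n}) \<subseteq> T n B' e' (v - {n})"
  proof
    fix Y assume Y: "Y \<in> T n B e (u - {n})"
    have Ys: "Y \<subseteq> {..<n}" using Y T_sub by blast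
    have "(if n \<in> u \<and> cf B e n Y then insert n Y else Y) \<in> T (Suc n) B' e' v"
      using T_ext[OF Suc.prems(1) Y] Suc.prems(3) by blast
    then show "Y \<in> T n B' e' (v - {n})"
      using mem_lo[OF Suc.prems(2) Ys] mem_hi[OF Suc.prems(2) Ys] by (auto split: if_splits)
  qed
  then have IH: "v - {n} \<subseteq> u - {n}" using Suc.IH[OF u0 v0] by blast
  have "n \<in> v \<Longrightarrow> n \<in> u"
  proof (rule ccontr)
    assume nv: "n \<in> v" and nu: "n \<notin> u"
    obtain Y where Y: "Y \<in> T n B e (u - {n})" using T_nonempty[OF u0] by blast
    have Ys: "Y \<subseteq> {..<n}" using Y T_sub by blast
    have "Y \<in> T (Suc n) B e u" "insert n Y \<in> T (Suc n) B e u"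
      using mem_lo[OF Suc.prems(1) Ys] mem_hi[OF Suc.prems(1) Ys] Y nu by auto
    then have "Y \<in> T (Suc n) B' e' v" "insert n Y \<in> T (Suc n) B' e' v" using Suc.prems(3) by auto
    then show False using mem_lo[OF Suc.prems(2) Ys] mem_hi[OF Suc.prems(2) Ys] nv by auto
  qed
  then show ?case using IH by blast
qed

lemma T_unique: "u \<subseteq> {..<n} \<Longrightarrow> v \<subseteq> {..<n} \<Longrightarrow> T n B e u = T n B' e' v \<Longrightarrow> u = v"
  using T_mono[of u n v B e B' e'] T_mono[of v n u B' e' B e] by auto

lemma odd_card_sd: "finite A \<Longrightarrow> finite B \<Longrightarrow> odd (card (sdiff A B)) = (odd (card A) \<noteq> odd (card B))"
proof -
  assume f: "finite A" "finite B"
  have d: "card (sdiff A B) = card (A - B) + card (B - A)"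
    unfolding sdiff_def using f by (intro card_Un_disjoint) auto
  have a: "card A = card (A - B) + card (A \<inter> B)"
    using f card_Int_Diff[of A B] by simp
  have b: "card B = card (B - A) + card (A \<inter> B)"
    using f card_Int_Diff[of B A] by (simp add: Int_commute)
  show ?thesis using d a b by auto
qed

lemma odd_card_sd_Int: "finite Y \<Longrightarrow> odd (card (sdiff L1 L2 \<inter> Y)) = (odd (card (L1 \<inter> Y)) \<noteq> odd (card (L2 \<inter> Y)))"
proof -
  assume "finite Y"
  have "sdiff L1 L2 \<inter> Y = sdiff (L1 \<inter> Y) (L2 \<inter> Y)" unfolding sdiff_def by auto
  then show ?thesis using odd_card_sd[of "L1 \<inter> Y" "L2 \<inter> Y"] \<open>finite Y\<close> by simp
qed

lemma card_Int_ins: "Y \<subseteq> {..<(n::nat)} \<Longrightarrow> odd (card (L \<inter> insert n Y)) = (odd (card (L \<inter> Y)) \<noteq> (n \<in> L))"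
proof -
  assume Y: "Y \<subseteq> {..<n}"
  then have fY: "finite Y" by (rule finite_subset) simp
  have nY: "n \<notin> Y" using Y by auto
  show ?thesis
  proof (cases "n \<in> L")
    case True
    then have "L \<inter> insert n Y = insert n (L \<inter> Y)" by auto
    moreover have "finite (L \<inter> Y)" using fY by blast
    moreover have "n \<notin> L \<inter> Y" using nY by blast
    ultimately have "card (L \<inter> insert n Y) = Suc (card (L \<inter> Y))" using card_insert_disjoint by metis
    then show ?thesis using True by (simp only: even_Suc) simp
  next
    case False
    then have "L \<inter> insert n Y = L \<inter> Y" by auto
    then show ?thesis using False by (simp only:) simp
  qed
qed

lemma fin_lt: "Y \<subseteq> {..<(n::nat)} \<Longrightarrow> finite Y"
  using finite_subset[of Y "{..<n}"] by simp

lemma hyper: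
  fixes n :: nat
  assumes "u \<subseteq> {..<n}"
  shows "{Y \<in> T n B e u. odd (card (L \<inter> Y)) = e0} = {} \<or> {Y \<in> T n B e u. odd (card (L \<inter> Y)) = e0} = T n B e u
     \<or> (\<exists>s B' e'. s < n \<and> s \<notin> u \<and> {Y \<in> T n B e u. odd (card (L \<inter> Y)) = e0} = T n B' e' (insert s u))"
  using assms
proof (induction n arbitrary: u B e L e0)
  case 0
  then have u: "u = {}" by auto
  have T0: "T 0 B e u = {{}}" unfolding T_def using u by auto
  have "{Y \<in> {{}}. odd (card (L \<inter> Y)) = e0} = (if e0 then {} else {{}})" by (cases e0) auto
  then show ?case unfolding T0 by (cases e0) simp_all
next
  case (Suc n)
  define X0 where "X0 = T n B e (u - {n})"
  define E where "E = {Y \<in> T (Suc n) B e u. odd (card (L \<inter> Y)) = e0}"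
  have u0: "u - {n} \<subseteq> {..<n}" using Suc.prems by auto
  have Esub: "\<And>Y. Y \<in> E \<Longrightarrow> Y \<subseteq> {..<Suc n}" unfolding E_def using T_sub by blast
  have Elo: "\<And>Y. Y \<subseteq> {..<n} \<Longrightarrow> Y \<in> E \<longleftrightarrow> Y \<in> X0 \<and> (n \<in> u \<longrightarrow> \<not> cf B e n Y) \<and> odd (card (L \<inter> Y)) = e0"
    unfolding E_def X0_def using mem_lo[OF Suc.prems] by auto
  have Ehi: "\<And>Y. Y \<subseteq> {..<n} \<Longrightarrow> insert n Y \<in> E \<longleftrightarrow> Y \<in> X0 \<and> (n \<in> u \<longrightarrow> cf B e n Y) \<and> (odd (card (L \<inter> Y)) \<noteq> (n \<in> L)) = e0"
    unfolding E_def X0_def using mem_hi[OF Suc.prems] card_Int_ins by auto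
  have "E = {} \<or> E = T (Suc n) B e u \<or> (\<exists>s B' e'. s < Suc n \<and> s \<notin> u \<and> E = T (Suc n) B' e' (insert s u))"
  proof (cases "n \<in> u")
    case True
    define Lc where "Lc = {j. j < n \<and> B n j}"
    define L' where "L' = (if n \<in> L then sdiff L Lc else L)"
    define e0' where "e0' = (if n \<in> L then (e0 = e n) else e0)"
    define E0 where "E0 = {Y \<in> X0. odd (card (L' \<inter> Y)) = e0'}"
    have key: "\<And>Y. Y \<subseteq> {..<n} \<Longrightarrow> (Y \<in> E \<longleftrightarrow> Y \<in> E0 \<and> \<not> cf B e n Y) \<and> (insert n Y \<in> E \<longleftrightarrow> Y \<in> E0 \<and> cf B e n Y)"
    proof -
      fix Y assume Y: "Y \<subseteq> {..<n}"
      have fY: "finite Y" using fin_lt[OF Y] .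
      have c: "cf B e n Y = (odd (card (Lc \<inter> Y)) = e n)" unfolding Lc_def using cf_alt[OF Y] .
      have p: "odd (card (sdiff L Lc \<inter> Y)) = (odd (card (L \<inter> Y)) \<noteq> odd (card (Lc \<inter> Y)))" using odd_card_sd_Int[OF fY] .
      show "(Y \<in> E \<longleftrightarrow> Y \<in> E0 \<and> \<not> cf B e n Y) \<and> (insert n Y \<in> E \<longleftrightarrow> Y \<in> E0 \<and> cf B e n Y)"
        using Elo[OF Y] Ehi[OF Y] c p True unfolding E0_def L'_def e0'_def by auto
    qed
    have IH: "E0 = {} \<or> E0 = X0 \<or> (\<exists>s B' e'. s < n \<and> s \<notin> u - {n} \<and> E0 = T n B' e' (insert s (u - {n})))"
      unfolding E0_def X0_def using Suc.IH[OF u0, of B e L' e0'] by blast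
    then show ?thesis
    proof (elim disjE exE conjE)
      assume "E0 = {}"
      then have "E = {}" using key by (intro set_eq_split[of E n "{}"]) (auto dest: Esub)
      then show ?thesis by blast
    next
      assume "E0 = X0"
      have "E = T (Suc n) B e u"
        using key mem_lo[OF Suc.prems] mem_hi[OF Suc.prems] T_sub \<open>E0 = X0\<close> True
        unfolding X0_def by (intro set_eq_split[of E n]) (auto dest: Esub)
      then show ?thesis by blast
    next
      fix s B' e' assume s: "s < n" "s \<notin> u - {n}" and E0: "E0 = T n B' e' (insert s (u - {n}))"
      define B'' where "B'' = B'(n := B n)"
      define e'' where "e'' = e'(n := e n)"
      have su: "insert s u \<subseteq> {..<Suc n}" using Suc.prems s by auto
      have eqs: "insert s u - {n} = insert s (u - {n})" using s by auto
      have TT: "T n B'' e'' (insert s (u - {n})) = T n B' e' (insert s (u - {n}))"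
        unfolding B''_def e''_def using s u0 by (intro T_cong) auto
      have cfe: "cf B'' e'' n Y = cf B e n Y" for Y unfolding cf_def B''_def e''_def by simp
      have "E = T (Suc n) B'' e'' (insert s u)"
      proof (rule set_eq_split[of E n])
        fix Y assume Y: "Y \<subseteq> {..<n}"
        show "(Y \<in> E \<longleftrightarrow> Y \<in> T (Suc n) B'' e'' (insert s u)) \<and> (insert n Y \<in> E \<longleftrightarrow> insert n Y \<in> T (Suc n) B'' e'' (insert s u))"
          using key[OF Y] mem_lo[OF su Y, of B'' e''] mem_hi[OF su Y, of B'' e''] eqs TT cfe E0 True by auto
      qed (auto dest: Esub T_sub)
      moreover have "s < Suc n" "s \<notin> u" using s by auto
      ultimately show ?thesis by blast
    qed
  next
    case False
    have X0: "X0 = T n B e u" unfolding X0_def using False by simp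
    show ?thesis
    proof (cases "n \<in> L")
      case True
      define B'' where "B'' = B(n := (\<lambda>j. j \<in> L))"
      define e'' where "e'' = e(n := \<not> e0)"
      have su: "insert n u \<subseteq> {..<Suc n}" using Suc.prems by auto
      have eqs: "insert n u - {n} = u" using False by auto
      have TT: "T n B'' e'' u = T n B e u"
        unfolding B''_def e''_def using u0 False by (intro T_cong) auto
      have cfe: "Y \<subseteq> {..<n} \<Longrightarrow> cf B'' e'' n Y = (odd (card (L \<inter> Y)) = (\<not> e0))" for Y
      proof -
        assume Y: "Y \<subseteq> {..<n}"
        have "{j. j < n \<and> B'' n j} \<inter> Y = L \<inter> Y" unfolding B''_def using Y by auto
        then show ?thesis using cf_alt[OF Y, of B'' e''] unfolding e''_def by simp
      qed
      have "E = T (Suc n) B'' e'' (insert n u)"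
      proof (rule set_eq_split[of E n])
        fix Y assume Y: "Y \<subseteq> {..<n}"
        show "(Y \<in> E \<longleftrightarrow> Y \<in> T (Suc n) B'' e'' (insert n u)) \<and> (insert n Y \<in> E \<longleftrightarrow> insert n Y \<in> T (Suc n) B'' e'' (insert n u))"
          using Elo[OF Y] Ehi[OF Y] mem_lo[OF su Y, of B'' e''] mem_hi[OF su Y, of B'' e''] eqs TT cfe[OF Y] X0 True False by auto
      qed (auto dest: Esub T_sub)
      moreover have "n < Suc n" "n \<notin> u" using False by auto
      ultimately show ?thesis by blast
    next
      case nL: False
      define E0 where "E0 = {Y \<in> X0. odd (card (L \<inter> Y)) = e0}"
      have key: "\<And>Y. Y \<subseteq> {..<n} \<Longrightarrow> (Y \<in> E \<longleftrightarrow> Y \<in> E0) \<and> (insert n Y \<in> E \<longleftrightarrow> Y \<in> E0)"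
        using Elo Ehi nL False unfolding E0_def by auto
      have IH: "E0 = {} \<or> E0 = X0 \<or> (\<exists>s B' e'. s < n \<and> s \<notin> u \<and> E0 = T n B' e' (insert s u))"
        unfolding E0_def X0 using Suc.IH[OF u0, of B e L e0] False by simp
      then show ?thesis
      proof (elim disjE exE conjE)
        assume "E0 = {}"
        then have "E = {}" using key by (intro set_eq_split[of E n "{}"]) (auto dest: Esub)
        then show ?thesis by blast
      next
        assume "E0 = X0"
        have "E = T (Suc n) B e u"
          using key mem_lo[OF Suc.prems] mem_hi[OF Suc.prems] T_sub \<open>E0 = X0\<close> False
          unfolding X0_def by (intro set_eq_split[of E n]) (auto dest: Esub)
        then show ?thesis by blast
      next
        fix s B' e' assume s: "s < n" "s \<notin> u" and E0: "E0 = T n B' e' (insert s u)"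
        have su: "insert s u \<subseteq> {..<Suc n}" using Suc.prems s by auto
        have eqs: "insert s u - {n} = insert s u" using s False by auto
        have "E = T (Suc n) B' e' (insert s u)"
        proof (rule set_eq_split[of E n])
          fix Y assume Y: "Y \<subseteq> {..<n}"
          show "(Y \<in> E \<longleftrightarrow> Y \<in> T (Suc n) B' e' (insert s u)) \<and> (insert n Y \<in> E \<longleftrightarrow> insert n Y \<in> T (Suc n) B' e' (insert s u))"
            using key[OF Y] mem_lo[OF su Y, of B' e'] mem_hi[OF su Y, of B' e'] eqs E0 s False by auto
        qed (auto dest: Esub T_sub)
        moreover have "s < Suc n" "s \<notin> u" using s by auto
      ultimately show ?thesis by blast
      qed
    qed
  qed
  then show ?case unfolding E_def .
qed

lemma set_eq_lt:
  assumes "\<And>X. X \<in> S1 \<Longrightarrow> X \<subseteq> {..<(n::nat)}" "\<And>X. X \<in> S2 \<Longrightarrow> X \<subseteq> {..<n}"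
    and "\<And>Y. Y \<subseteq> {..<n} \<Longrightarrow> (Y \<in> S1 \<longleftrightarrow> Y \<in> S2)"
  shows "S1 = S2"
proof (rule set_eqI)
  fix X
  show "X \<in> S1 \<longleftrightarrow> X \<in> S2"
    using assms by (cases "X \<subseteq> {..<n}") blast+
qed

lemma sdiff_sub: "(\<And>X. X \<in> S1 \<Longrightarrow> X \<subseteq> N) \<Longrightarrow> (\<And>X. X \<in> S2 \<Longrightarrow> X \<subseteq> N) \<Longrightarrow> X \<in> sdiff S1 S2 \<Longrightarrow> X \<subseteq> N"
  unfolding sdiff_def by blast

definition R :: "nat set \<Rightarrow> nat set \<Rightarrow> bool" where
  "R g h \<longleftrightarrow> (h \<subseteq> g \<and> card h + 1 = card g) \<or>
     (\<exists>a u. a < u \<and> a \<in> h \<and> a \<notin> g \<and> u \<in> g \<and> u \<notin> h \<and> h - {a} = g - {u})"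

lemma R_lift:
  assumes "finite g" "finite h" "n \<in> g" "n \<in> h" "R (g - {n}) (h - {n})"
  shows "R g h"
proof -
  have cg: "card (g - {n}) + 1 = card g" using card_Suc_Diff1[OF assms(1,3)] by linarith
  have ch: "card (h - {n}) + 1 = card h" using card_Suc_Diff1[OF assms(2,4)] by linarith
  from assms(5)[unfolded R_def] show ?thesis
  proof (elim disjE exE conjE)
    assume a: "h - {n} \<subseteq> g - {n}" "card (h - {n}) + 1 = card (g - {n})"
    have "h \<subseteq> g" using a(1) assms(3) by blast
    moreover have "card h + 1 = card g" using a(2) cg ch by linarith
    ultimately show ?thesis unfolding R_def by blast
  next
    fix a u assume a: "a < u" "a \<in> h - {n}" "a \<notin> g - {n}" "u \<in> g - {n}" "u \<notin> h - {n}"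
      "h - {n} - {a} = g - {n} - {u}"
    have "h - {a} = g - {u}"
    proof -
      have "h - {a} = insert n (h - {n} - {a})" using a assms(4) by auto
      also have "\<dots> = insert n (g - {n} - {u})" using a by simp
      also have "\<dots> = g - {u}" using a assms(3) by auto
      finally show ?thesis .
    qed
    then show ?thesis using a unfolding R_def by blast
  qed
qed

lemma C2:
  fixes n :: nat
  assumes "g \<subseteq> {..<n}" "h \<subseteq> {..<n}" "sdiff (T n Bx ex g) (T n By ey g) = T n Bz ez h"
  shows "R g h"
  using assms
proof (induction n arbitrary: g h Bx ex By ey Bz ez)
  case 0
  then have "g = {}" "h = {}" by auto
  then have "T 0 Bx ex g = {{}}" "T 0 By ey g = {{}}" "T 0 Bz ez h = {{}}" unfolding T_def by auto
  then show ?case using "0.prems"(3) unfolding sdiff_def by simp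
next
  case (Suc n)
  define X0 where "X0 = T n Bx ex (g - {n})"
  define Y0 where "Y0 = T n By ey (g - {n})"
  define Z0 where "Z0 = T n Bz ez (h - {n})"
  have g0: "g - {n} \<subseteq> {..<n}" and h0: "h - {n} \<subseteq> {..<n}" using Suc.prems by auto
  have fg: "finite g" "finite h" using Suc.prems(1,2) fin_lt by blast+
  have lo: "((Y \<in> X0 \<and> (n \<in> g \<longrightarrow> \<not> cf Bx ex n Y)) \<noteq> (Y \<in> Y0 \<and> (n \<in> g \<longrightarrow> \<not> cf By ey n Y)))
     = (Y \<in> Z0 \<and> (n \<in> h \<longrightarrow> \<not> cf Bz ez n Y))" if Y: "Y \<subseteq> {..<n}" for Y
  proof -
    have "((Y \<in> T (Suc n) Bx ex g) \<noteq> (Y \<in> T (Suc n) By ey g)) = (Y \<in> T (Suc n) Bz ez h)"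
      using Suc.prems(3) by (metis mem_sdiff)
    then show ?thesis unfolding X0_def Y0_def Z0_def
      using mem_lo[OF Suc.prems(1) Y] mem_lo[OF Suc.prems(2) Y] by simp
  qed
  have hi: "((Y \<in> X0 \<and> (n \<in> g \<longrightarrow> cf Bx ex n Y)) \<noteq> (Y \<in> Y0 \<and> (n \<in> g \<longrightarrow> cf By ey n Y)))
     = (Y \<in> Z0 \<and> (n \<in> h \<longrightarrow> cf Bz ez n Y))" if Y: "Y \<subseteq> {..<n}" for Y
  proof -
    have "((insert n Y \<in> T (Suc n) Bx ex g) \<noteq> (insert n Y \<in> T (Suc n) By ey g)) = (insert n Y \<in> T (Suc n) Bz ez h)"
      using Suc.prems(3) by (metis mem_sdiff)
    then show ?thesis unfolding X0_def Y0_def Z0_def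
      using mem_hi[OF Suc.prems(1) Y] mem_hi[OF Suc.prems(2) Y] by simp
  qed
  have subs: "\<And>X. X \<in> X0 \<Longrightarrow> X \<subseteq> {..<n}" "\<And>X. X \<in> Y0 \<Longrightarrow> X \<subseteq> {..<n}" "\<And>X. X \<in> Z0 \<Longrightarrow> X \<subseteq> {..<n}"
    unfolding X0_def Y0_def Z0_def using T_sub by blast+
  show ?case
  proof (cases "n \<in> g")
    case ng: True
    show ?thesis
    proof (cases "n \<in> h")
      case nh: True
      have "sdiff X0 Y0 = Z0"
      proof (rule set_eq_lt[of _ n])
        fix Y assume Y: "Y \<subseteq> {..<n}"
        show "Y \<in> sdiff X0 Y0 \<longleftrightarrow> Y \<in> Z0" using lo[OF Y] hi[OF Y] ng nh by auto
      qed (insert subs, (unfold sdiff_def)?, blast+)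
      then have "R (g - {n}) (h - {n})" using Suc.IH[OF g0 h0] unfolding X0_def Y0_def Z0_def by blast
      then show ?thesis using R_lift fg ng nh by blast
    next
      case nh: False
      have Z0': "Z0 = T n Bz ez h" unfolding Z0_def using nh by simp
      define L where "L = sdiff {j. j < n \<and> Bx n j} {j. j < n \<and> By n j}"
      have "Z0 = {Y \<in> X0. odd (card (L \<inter> Y)) = (ex n = ey n)}"
      proof (rule set_eq_lt[of _ n])
        fix Y assume Y: "Y \<subseteq> {..<n}"
        have p: "odd (card (L \<inter> Y)) = (odd (card ({j. j < n \<and> Bx n j} \<inter> Y)) \<noteq> odd (card ({j. j < n \<and> By n j} \<inter> Y)))"
          unfolding L_def using odd_card_sd_Int[OF fin_lt[OF Y]] .
        show "Y \<in> Z0 \<longleftrightarrow> Y \<in> {Y \<in> X0. odd (card (L \<inter> Y)) = (ex n = ey n)}"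
          using lo[OF Y] hi[OF Y] ng nh p cf_alt[OF Y, of Bx ex] cf_alt[OF Y, of By ey] by auto
      qed (insert subs, blast+)
      then have "Z0 = {} \<or> Z0 = X0 \<or> (\<exists>s B' e'. s < n \<and> s \<notin> g - {n} \<and> Z0 = T n B' e' (insert s (g - {n})))"
        using hyper[OF g0, of Bx ex L "ex n = ey n"] unfolding X0_def by simp
      then show ?thesis
      proof (elim disjE exE conjE)
        assume "Z0 = {}"
        then show ?thesis using T_nonempty[OF h0] unfolding Z0_def by simp
      next
        assume "Z0 = X0"
        then have "h - {n} = g - {n}" using T_unique[OF h0 g0] unfolding X0_def Z0_def by blast
        then have hg: "h = g - {n}" using nh by simp
        then have "h \<subseteq> g" by blast
        moreover have "card h + 1 = card g" using card_Suc_Diff1[OF fg(1) ng] unfolding hg by linarith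
        ultimately show ?thesis unfolding R_def by blast
      next
        fix s B' e' assume s: "s < n" "s \<notin> g - {n}" "Z0 = T n B' e' (insert s (g - {n}))"
        have sg: "insert s (g - {n}) \<subseteq> {..<n}" using s g0 by auto
        have "h - {n} = insert s (g - {n})" using T_unique[OF h0 sg] s(3) unfolding Z0_def by blast
        then have "h = insert s (g - {n})" using nh by simp
        moreover have "s \<notin> g" using s by auto
        ultimately have "s < n \<and> s \<in> h \<and> s \<notin> g \<and> n \<in> g \<and> n \<notin> h \<and> h - {s} = g - {n}" using s ng nh by auto
        then show ?thesis unfolding R_def by blast
      qed
    qed
  next
    case ng: False
    show ?thesis
    proof (cases "n \<in> h")
      case nh: True
      obtain Y where Y: "Y \<in> Z0" using T_nonempty[OF h0] unfolding Z0_def by blast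
      then have "Y \<subseteq> {..<n}" using subs by blast
      then show ?thesis using lo[of Y] hi[of Y] Y ng nh by auto
    next
      case nh: False
      have "sdiff X0 Y0 = Z0"
      proof (rule set_eq_lt[of _ n])
        fix Y assume Y: "Y \<subseteq> {..<n}"
        show "Y \<in> sdiff X0 Y0 \<longleftrightarrow> Y \<in> Z0" using lo[OF Y] ng nh by auto
      qed (insert subs, (unfold sdiff_def)?, blast+)
      moreover have "g - {n} = g" "h - {n} = h" using ng nh by auto
      ultimately show ?thesis using Suc.IH[OF g0 h0] unfolding X0_def Y0_def Z0_def by simp
    qed
  qed
qed

definition cond1 :: "nat set \<Rightarrow> nat set \<Rightarrow> bool" where
  "cond1 f g \<longleftrightarrow> (\<exists>a b. a < b \<and> a \<in> (f - g) \<union> (g - f) \<and> b \<in> (f - g) \<union> (g - f)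
              \<and> (\<forall>c \<in> (f - g) \<union> (g - f). c \<le> a \<or> c = b)
              \<and> ({a, b} \<subseteq> f \<or> {a, b} \<subseteq> g))"

definition Q :: "nat set \<Rightarrow> nat set \<Rightarrow> bool" where
  "Q f g \<longleftrightarrow> \<not> (cond1 f g \<or> card (f \<inter> g) + 2 < card f)"

lemma two_le_card: "finite A \<Longrightarrow> a \<in> A \<Longrightarrow> b \<in> A \<Longrightarrow> a \<noteq> b \<Longrightarrow> 2 \<le> card A"
proof -
  assume "finite A" "a \<in> A" "b \<in> A" "a \<noteq> b"
  then have "card {a, b} \<le> card A" by (intro card_mono) auto
  then show ?thesis using \<open>a \<noteq> b\<close> by simp
qed

lemma L1:
  assumes "finite f" "finite g" "card f = card g" "card f \<le> card (f \<inter> g) + 1"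
  shows "Q f g"
proof -
  have cf: "card f = card (f \<inter> g) + card (f - g)" using card_Int_Diff[OF assms(1)] .
  have cg: "card g = card (f \<inter> g) + card (g - f)" using card_Int_Diff[OF assms(2), of f] by (simp add: Int_commute)
  have "\<not> cond1 f g"
  proof
    assume "cond1 f g"
    then obtain a b where ab: "a < b" "a \<in> (f - g) \<union> (g - f)" "b \<in> (f - g) \<union> (g - f)" "{a, b} \<subseteq> f \<or> {a, b} \<subseteq> g"
      unfolding cond1_def by blast
    show False
    proof (cases "{a, b} \<subseteq> f")
      case True
      then have "a \<in> f - g" "b \<in> f - g" using ab by auto
      then have "2 \<le> card (f - g)" using two_le_card[of "f - g" a b] assms(1) ab(1) by simp
      then show False using cf assms(4) by linarith
    next
      case False
      then have "a \<in> g - f" "b \<in> g - f" using ab by auto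
      then have "2 \<le> card (g - f)" using two_le_card[of "g - f" a b] assms(2) ab(1) by simp
      then show False using cg assms(3,4) by linarith
    qed
  qed
  then show ?thesis unfolding Q_def using assms(4) by linarith
qed

lemma Q_sym: "card f = card g \<Longrightarrow> Q f g \<Longrightarrow> Q g f"
proof -
  assume c: "card f = card g" and q: "Q f g"
  have "cond1 g f = cond1 f g" unfolding cond1_def by (simp add: Un_commute disj_commute)
  then show ?thesis using q c unfolding Q_def by (simp add: Int_commute)
qed

lemma Q_del:
  assumes "finite f" "t \<in> f" "t \<in> g" "Q (f - {t}) (g - {t})"
  shows "Q f g"
proof -
  have sd: "(f - {t} - (g - {t})) \<union> (g - {t} - (f - {t})) = (f - g) \<union> (g - f)" using assms by auto
  have "cond1 f g \<Longrightarrow> cond1 (f - {t}) (g - {t})"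
  proof -
    assume "cond1 f g"
    then obtain a b where ab: "a < b" "a \<in> (f - g) \<union> (g - f)" "b \<in> (f - g) \<union> (g - f)"
      "\<forall>c \<in> (f - g) \<union> (g - f). c \<le> a \<or> c = b" "{a, b} \<subseteq> f \<or> {a, b} \<subseteq> g"
      unfolding cond1_def by blast
    have "a \<noteq> t" "b \<noteq> t" using ab(2,3) assms(2,3) by auto
    then have "{a, b} \<subseteq> f - {t} \<or> {a, b} \<subseteq> g - {t}" using ab(5) by auto
    then show ?thesis unfolding cond1_def sd using ab(1-4) by blast
  qed
  moreover have "card ((f - {t}) \<inter> (g - {t})) + 1 = card (f \<inter> g)"
  proof -
    have "(f - {t}) \<inter> (g - {t}) = (f \<inter> g) - {t}" by auto
    moreover have "finite (f \<inter> g)" "t \<in> f \<inter> g" using assms by auto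
    ultimately show ?thesis using card_Suc_Diff1[of "f \<inter> g" t] by simp
  qed
  moreover have "card (f - {t}) + 1 = card f" using card_Suc_Diff1[OF assms(1,2)] by linarith
  ultimately show ?thesis using assms(4) unfolding Q_def by linarith
qed

lemma L2:
  fixes n :: nat
  assumes fg: "f \<subseteq> {..<Suc n}" "g \<subseteq> {..<Suc n}" and nf: "n \<in> f" and ng: "n \<notin> g"
    and s: "s \<notin> f" and h: "h = insert s (f - {n})"
    and au: "a < u" "a \<in> h" "a \<notin> g" "u \<in> g" "u \<notin> h" "h - {a} = g - {u}"
    and c: "card f = card g"
  shows "Q f g"
proof -
  have ff: "finite f" "finite g" using fg fin_lt by blast+
  have ch: "card h = card f"
  proof -
    have "card h = Suc (card (f - {n}))" unfolding h using s ff by simp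
    then show ?thesis using card_Suc_Diff1[OF ff(1) nf] by simp
  qed
  have sub: "h - {a, s} \<subseteq> f \<inter> g" using au(6) unfolding h by auto
  have "card h - card {a, s} \<le> card (h - {a, s})" by (rule diff_card_le_card_Diff) simp
  moreover have "card {a, s} \<le> 2" by (simp add: card_insert_if)
  moreover have "card (h - {a, s}) \<le> card (f \<inter> g)" using sub ff by (intro card_mono) auto
  ultimately have cardp: "\<not> card (f \<inter> g) + 2 < card f" using ch by linarith
  have "\<not> cond1 f g"
  proof
    assume "cond1 f g"
    then obtain aa bb where ab: "aa < bb" "aa \<in> (f - g) \<union> (g - f)" "bb \<in> (f - g) \<union> (g - f)"
      "\<forall>c \<in> (f - g) \<union> (g - f). c \<le> aa \<or> c = bb" "{aa, bb} \<subseteq> f \<or> {aa, bb} \<subseteq> g"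
      unfolding cond1_def by blast
    have nsd: "n \<in> (f - g) \<union> (g - f)" using nf ng by blast
    have "bb < Suc n" using ab(3) fg by auto
    moreover have "n \<le> aa \<or> n = bb" using ab(4) nsd by blast
    ultimately have bbn: "bb = n" using ab(1) by (elim disjE) linarith+
    have "u \<notin> f" using au(5) ng au(4) unfolding h by auto
    then have "u \<in> (f - g) \<union> (g - f)" using au(4) by blast
    moreover have "u \<noteq> n" using au(4) ng by blast
    ultimately have "u \<le> aa" using ab(4) bbn by blast
    then have "aa \<noteq> a" using au(1) by simp
    have "aa \<notin> f - g"
    proof
      assume "aa \<in> f - g"
      moreover have "aa \<noteq> n" using ab(1) bbn by simp
      ultimately have "aa \<in> h - {a}" using \<open>aa \<noteq> a\<close> unfolding h by auto
      then show False using au(6) \<open>aa \<in> f - g\<close> by auto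
    qed
    then have "aa \<notin> f" using ab(2) by blast
    then show False using ab(5) bbn ng by blast
  qed
  then show ?thesis unfolding Q_def using cardp by blast
qed

lemma R_cases:
  assumes "finite g" "finite h" "R g h"
  shows "card h + 1 = card g \<or> card h = card g"
proof -
  from assms(3)[unfolded R_def] show ?thesis
  proof (elim disjE exE conjE)
    fix a u assume a: "a \<in> h" "u \<in> g" "h - {a} = g - {u}"
    have "card (h - {a}) + 1 = card h" using card_Suc_Diff1[OF assms(2) a(1)] by linarith
    moreover have "card (g - {u}) + 1 = card g" using card_Suc_Diff1[OF assms(1) a(2)] by linarith
    ultimately show ?thesis using a(3) by simp
  qed simp
qed

lemma R_sub:
  assumes "finite g" "finite h" "R g h" "card h + 1 = card g"
  shows "h \<subseteq> g"
proof -
  from assms(3)[unfolded R_def] show ?thesis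
  proof (elim disjE exE conjE)
    fix a u assume a: "a \<in> h" "u \<in> g" "h - {a} = g - {u}"
    have "card (h - {a}) + 1 = card h" using card_Suc_Diff1[OF assms(2) a(1)] by linarith
    moreover have "card (g - {u}) + 1 = card g" using card_Suc_Diff1[OF assms(1) a(2)] by linarith
    ultimately show ?thesis using a(3) assms(4) by simp
  qed simp
qed

lemma graph_eq:
  assumes u: "u \<subseteq> {..<Suc n}" and nu: "n \<in> u"
    and A: "\<And>Y. Y \<subseteq> {..<n} \<Longrightarrow> Y \<in> T n B e (u - {n}) \<longleftrightarrow> Y \<in> T n B' e' (u - {n})"
    and C: "\<And>Y. Y \<subseteq> {..<n} \<Longrightarrow> Y \<in> T n B e (u - {n}) \<Longrightarrow> cf B e n Y = cf B' e' n Y"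
  shows "T (Suc n) B e u = T (Suc n) B' e' u"
proof (rule set_eq_split[of _ n])
  fix Y assume Y: "Y \<subseteq> {..<n}"
  show "(Y \<in> T (Suc n) B e u \<longleftrightarrow> Y \<in> T (Suc n) B' e' u) \<and> (insert n Y \<in> T (Suc n) B e u \<longleftrightarrow> insert n Y \<in> T (Suc n) B' e' u)"
    using mem_lo[OF u Y] mem_hi[OF u Y] A[OF Y] C[OF Y] nu by auto
qed (auto dest: T_sub)

lemma Case1:
  fixes n :: nat
  assumes f: "f \<subseteq> {..<Suc n}" and g: "g \<subseteq> {..<Suc n}" and nf: "n \<in> f" and ng: "n \<notin> g"
    and c: "card f = card g"
    and eq: "sdiff (T (Suc n) B1 e1 f) (T (Suc n) B1' e1' f) = sdiff (T (Suc n) B2 e2 g) (T (Suc n) B2' e2' g)"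
  shows "T (Suc n) B1 e1 f = T (Suc n) B1' e1' f \<or> Q f g"
proof -
  define A0 where "A0 = T n B1 e1 (f - {n})"
  define A0' where "A0' = T n B1' e1' (f - {n})"
  define G0 where "G0 = T n B2 e2 g"
  define G0' where "G0' = T n B2' e2' g"
  have f0: "f - {n} \<subseteq> {..<n}" using f by auto
  have g0: "g \<subseteq> {..<n}" using g ng by (auto simp: less_Suc_eq)
  have gn: "g - {n} = g" using ng by simp
  have ff: "finite f" "finite g" using f g fin_lt by blast+
  have pt: "((X \<in> T (Suc n) B1 e1 f) \<noteq> (X \<in> T (Suc n) B1' e1' f)) = ((X \<in> T (Suc n) B2 e2 g) \<noteq> (X \<in> T (Suc n) B2' e2' g))" for X
    using eq by (metis mem_sdiff)
  have lo: "((Y \<in> A0 \<and> \<not> cf B1 e1 n Y) \<noteq> (Y \<in> A0' \<and> \<not> cf B1' e1' n Y)) = ((Y \<in> G0) \<noteq> (Y \<in> G0'))"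
    if Y: "Y \<subseteq> {..<n}" for Y
    using pt[of Y] mem_lo[OF f Y] mem_lo[OF g Y] nf ng unfolding A0_def A0'_def G0_def G0'_def gn by simp
  have hi: "((Y \<in> A0 \<and> cf B1 e1 n Y) \<noteq> (Y \<in> A0' \<and> cf B1' e1' n Y)) = ((Y \<in> G0) \<noteq> (Y \<in> G0'))"
    if Y: "Y \<subseteq> {..<n}" for Y
    using pt[of "insert n Y"] mem_hi[OF f Y] mem_hi[OF g Y] nf ng unfolding A0_def A0'_def G0_def G0'_def gn by simp
  have AA: "Y \<in> A0 \<longleftrightarrow> Y \<in> A0'" if Y: "Y \<subseteq> {..<n}" for Y
    using lo[OF Y] hi[OF Y] by auto
  define L where "L = sdiff {j. j < n \<and> B1 n j} {j. j < n \<and> B1' n j}"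
  define E where "E = {Y \<in> A0. odd (card (L \<inter> Y)) = (e1 n = e1' n)}"
  have Ec: "Y \<in> E \<longleftrightarrow> Y \<in> A0 \<and> cf B1 e1 n Y \<noteq> cf B1' e1' n Y" if Y: "Y \<subseteq> {..<n}" for Y
  proof -
    have p: "odd (card (L \<inter> Y)) = (odd (card ({j. j < n \<and> B1 n j} \<inter> Y)) \<noteq> odd (card ({j. j < n \<and> B1' n j} \<inter> Y)))"
      unfolding L_def using odd_card_sd_Int[OF fin_lt[OF Y]] .
    show ?thesis unfolding E_def using p cf_alt[OF Y, of B1 e1] cf_alt[OF Y, of B1' e1'] by auto
  qed
  have subs: "\<And>X. X \<in> A0 \<Longrightarrow> X \<subseteq> {..<n}" "\<And>X. X \<in> G0 \<Longrightarrow> X \<subseteq> {..<n}" "\<And>X. X \<in> G0' \<Longrightarrow> X \<subseteq> {..<n}"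
    unfolding A0_def G0_def G0'_def using T_sub by blast+
  have EB: "sdiff G0 G0' = E"
  proof (rule set_eq_lt[of _ n])
    fix Y assume Y: "Y \<subseteq> {..<n}"
    show "Y \<in> sdiff G0 G0' \<longleftrightarrow> Y \<in> E" using lo[OF Y] hi[OF Y] AA[OF Y] Ec[OF Y] by auto
  qed (insert subs, unfold sdiff_def E_def, blast+)
  have "E = {} \<or> E = A0 \<or> (\<exists>s B' e'. s < n \<and> s \<notin> f - {n} \<and> E = T n B' e' (insert s (f - {n})))"
    using hyper[OF f0, of B1 e1 L "e1 n = e1' n"] unfolding E_def A0_def by simp
  then show ?thesis
  proof (elim disjE exE conjE)
    assume "E = {}"
    have "T (Suc n) B1 e1 f = T (Suc n) B1' e1' f"
    proof (rule graph_eq[OF f nf])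
      fix Y assume Y: "Y \<subseteq> {..<n}"
      show "Y \<in> T n B1 e1 (f - {n}) \<longleftrightarrow> Y \<in> T n B1' e1' (f - {n})" using AA[OF Y] unfolding A0_def A0'_def .
      show "Y \<in> T n B1 e1 (f - {n}) \<Longrightarrow> cf B1 e1 n Y = cf B1' e1' n Y"
        using Ec[OF Y] \<open>E = {}\<close> unfolding A0_def by blast
    qed
    then show ?thesis by blast
  next
    assume "E = A0"
    then have "sdiff G0 G0' = T n B1 e1 (f - {n})" using EB unfolding A0_def by simp
    then have R: "R g (f - {n})" using C2[OF g0 f0] unfolding G0_def G0'_def by blast
    have cf1: "card (f - {n}) + 1 = card f" using card_Suc_Diff1[OF ff(1) nf] by linarith
    have "card (f - {n}) + 1 = card g" using R_cases[OF ff(2) _ R] ff cf1 c by auto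
    then have "f - {n} \<subseteq> g" using R_sub[OF ff(2) _ R] ff by blast
    then have "f - {n} \<subseteq> f \<inter> g" by blast
    then have "card (f - {n}) \<le> card (f \<inter> g)" using ff by (intro card_mono) auto
    then show ?thesis using L1[OF ff c] cf1 by linarith
  next
    fix s B' e' assume s: "s < n" "s \<notin> f - {n}" and E: "E = T n B' e' (insert s (f - {n}))"
    have sf: "insert s (f - {n}) \<subseteq> {..<n}" using s f0 by auto
    have R: "R g (insert s (f - {n}))" using C2[OF g0 sf, of B2 e2 B2' e2' B' e'] EB E unfolding G0_def G0'_def by blast
    have ch: "card (insert s (f - {n})) = card f"
      using card_Suc_Diff1[OF ff(1) nf] s ff by simp
    have sf': "s \<notin> f" using s by auto
    from R[unfolded R_def] show ?thesis
    proof (elim disjE exE conjE)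
      assume "card (insert s (f - {n})) + 1 = card g"
      then show ?thesis using ch c by simp
    next
      fix a u assume au: "a < u" "a \<in> insert s (f - {n})" "a \<notin> g" "u \<in> g" "u \<notin> insert s (f - {n})"
        "insert s (f - {n}) - {a} = g - {u}"
      show ?thesis using L2[OF f g nf ng sf' refl au c] by blast
    qed
  qed
qed

lemma L3:
  assumes "finite f" "finite g" "n \<in> f" "n \<in> g" "card f = card g"
    "insert s (f - {n}) = insert s' (g - {n})"
  shows "card f \<le> card (f \<inter> g) + 1"
proof -
  have sub: "insert n (f - {n} - {s'}) \<subseteq> f \<inter> g" using assms(3,4,6) by blast
  have "card (f - {n}) - card {s'} \<le> card (f - {n} - {s'})" by (rule diff_card_le_card_Diff) simp
  moreover have "card (insert n (f - {n} - {s'})) = Suc (card (f - {n} - {s'}))" using assms(1) by simp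
  moreover have "card (insert n (f - {n} - {s'})) \<le> card (f \<inter> g)" using sub assms(1) by (intro card_mono) auto
  moreover have "card (f - {n}) + 1 = card f" using card_Suc_Diff1[OF assms(1,3)] by linarith
  ultimately show ?thesis by simp
qed

lemma Main:
  fixes n :: nat
  assumes "f \<subseteq> {..<n}" "g \<subseteq> {..<n}" "card f = card g"
    "sdiff (T n B1 e1 f) (T n B1' e1' f) = sdiff (T n B2 e2 g) (T n B2' e2' g)"
  shows "T n B1 e1 f = T n B1' e1' f \<or> Q f g"
  using assms
proof (induction n arbitrary: f g B1 e1 B1' e1' B2 e2 B2' e2')
  case 0
  then have "f = {}" "g = {}" by auto
  then show ?case using L1[of "{}" "{}"] by simp
next
  case (Suc n)
  note f = Suc.prems(1) and g = Suc.prems(2) and c = Suc.prems(3) and eq = Suc.prems(4)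
  define A0 where "A0 = T n B1 e1 (f - {n})"
  define A0' where "A0' = T n B1' e1' (f - {n})"
  define G0 where "G0 = T n B2 e2 (g - {n})"
  define G0' where "G0' = T n B2' e2' (g - {n})"
  have f0: "f - {n} \<subseteq> {..<n}" using f by auto
  have g0: "g - {n} \<subseteq> {..<n}" using g by auto
  have ff: "finite f" "finite g" using f g fin_lt by blast+
  have pt: "((X \<in> T (Suc n) B1 e1 f) \<noteq> (X \<in> T (Suc n) B1' e1' f)) = ((X \<in> T (Suc n) B2 e2 g) \<noteq> (X \<in> T (Suc n) B2' e2' g))" for X
    using eq by (metis mem_sdiff)
  have lo: "((Y \<in> A0 \<and> (n \<in> f \<longrightarrow> \<not> cf B1 e1 n Y)) \<noteq> (Y \<in> A0' \<and> (n \<in> f \<longrightarrow> \<not> cf B1' e1' n Y)))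
      = ((Y \<in> G0 \<and> (n \<in> g \<longrightarrow> \<not> cf B2 e2 n Y)) \<noteq> (Y \<in> G0' \<and> (n \<in> g \<longrightarrow> \<not> cf B2' e2' n Y)))"
    if Y: "Y \<subseteq> {..<n}" for Y
    using pt[of Y] mem_lo[OF f Y] mem_lo[OF g Y] unfolding A0_def A0'_def G0_def G0'_def by simp
  have hi: "((Y \<in> A0 \<and> (n \<in> f \<longrightarrow> cf B1 e1 n Y)) \<noteq> (Y \<in> A0' \<and> (n \<in> f \<longrightarrow> cf B1' e1' n Y)))
      = ((Y \<in> G0 \<and> (n \<in> g \<longrightarrow> cf B2 e2 n Y)) \<noteq> (Y \<in> G0' \<and> (n \<in> g \<longrightarrow> cf B2' e2' n Y)))"
    if Y: "Y \<subseteq> {..<n}" for Y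
    using pt[of "insert n Y"] mem_hi[OF f Y] mem_hi[OF g Y] unfolding A0_def A0'_def G0_def G0'_def by simp
  have subs: "\<And>X. X \<in> A0 \<Longrightarrow> X \<subseteq> {..<n}" "\<And>X. X \<in> A0' \<Longrightarrow> X \<subseteq> {..<n}"
    "\<And>X. X \<in> G0 \<Longrightarrow> X \<subseteq> {..<n}" "\<And>X. X \<in> G0' \<Longrightarrow> X \<subseteq> {..<n}"
    unfolding A0_def A0'_def G0_def G0'_def using T_sub by blast+
  have red: "sdiff A0 A0' = sdiff G0 G0'" if fgn: "n \<in> f \<longleftrightarrow> n \<in> g"
  proof (rule set_eq_lt[of _ n])
    fix Y assume Y: "Y \<subseteq> {..<n}"
    show "Y \<in> sdiff A0 A0' \<longleftrightarrow> Y \<in> sdiff G0 G0'" using lo[OF Y] hi[OF Y] fgn by (cases "n \<in> f") auto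
  qed (insert subs, unfold sdiff_def, blast+)
  have cd: "card (f - {n}) = card (g - {n})" if "n \<in> f \<longleftrightarrow> n \<in> g"
    using that c ff by (cases "n \<in> f") auto
  show ?case
  proof (cases "n \<in> f")
    case nf: True
    show ?thesis
    proof (cases "n \<in> g")
      case ng: True
      have IH: "A0 = A0' \<or> Q (f - {n}) (g - {n})"
        using Suc.IH[OF f0 g0 cd] red nf ng unfolding A0_def A0'_def G0_def G0'_def by blast
      then show ?thesis
      proof
        assume "Q (f - {n}) (g - {n})"
        then show ?thesis using Q_del[OF ff(1) nf ng] by blast
      next
        assume AA: "A0 = A0'"
        have GG: "G0 = G0'"
        proof -
          have "sdiff G0 G0' = {}" using red nf ng AA unfolding sdiff_def by auto
          then show ?thesis unfolding sdiff_def by blast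
        qed
        define L1 where "L1 = sdiff {j. j < n \<and> B1 n j} {j. j < n \<and> B1' n j}"
        define E1 where "E1 = {Y \<in> A0. odd (card (L1 \<inter> Y)) = (e1 n = e1' n)}"
        define L2 where "L2 = sdiff {j. j < n \<and> B2 n j} {j. j < n \<and> B2' n j}"
        define E2 where "E2 = {Y \<in> G0. odd (card (L2 \<inter> Y)) = (e2 n = e2' n)}"
        have Ec1: "Y \<in> E1 \<longleftrightarrow> Y \<in> A0 \<and> cf B1 e1 n Y \<noteq> cf B1' e1' n Y" if Y: "Y \<subseteq> {..<n}" for Y
        proof -
          have p: "odd (card (L1 \<inter> Y)) = (odd (card ({j. j < n \<and> B1 n j} \<inter> Y)) \<noteq> odd (card ({j. j < n \<and> B1' n j} \<inter> Y)))"
            unfolding L1_def using odd_card_sd_Int[OF fin_lt[OF Y]] .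
          show ?thesis unfolding E1_def using p cf_alt[OF Y, of B1 e1] cf_alt[OF Y, of B1' e1'] by auto
        qed
        have Ec2: "Y \<in> E2 \<longleftrightarrow> Y \<in> G0 \<and> cf B2 e2 n Y \<noteq> cf B2' e2' n Y" if Y: "Y \<subseteq> {..<n}" for Y
        proof -
          have p: "odd (card (L2 \<inter> Y)) = (odd (card ({j. j < n \<and> B2 n j} \<inter> Y)) \<noteq> odd (card ({j. j < n \<and> B2' n j} \<inter> Y)))"
            unfolding L2_def using odd_card_sd_Int[OF fin_lt[OF Y]] .
          show ?thesis unfolding E2_def using p cf_alt[OF Y, of B2 e2] cf_alt[OF Y, of B2' e2'] by auto
        qed
        have EE: "E1 = E2"
        proof (rule set_eq_lt[of _ n])
          fix Y assume Y: "Y \<subseteq> {..<n}"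
          show "Y \<in> E1 \<longleftrightarrow> Y \<in> E2" using lo[OF Y] Ec1[OF Y] Ec2[OF Y] AA GG nf ng by auto
        qed (insert subs, unfold E1_def E2_def, blast+)
        have AAeq: "T (Suc n) B1 e1 f = T (Suc n) B1' e1' f" if "E1 = {}"
        proof (rule graph_eq[OF f nf])
          fix Y assume Y: "Y \<subseteq> {..<n}"
          show "Y \<in> T n B1 e1 (f - {n}) \<longleftrightarrow> Y \<in> T n B1' e1' (f - {n})" using AA unfolding A0_def A0'_def by simp
          show "Y \<in> T n B1 e1 (f - {n}) \<Longrightarrow> cf B1 e1 n Y = cf B1' e1' n Y"
            using Ec1[OF Y] \<open>E1 = {}\<close> unfolding A0_def by blast
        qed
        have H1: "E1 = {} \<or> E1 = A0 \<or> (\<exists>s B' e'. s < n \<and> s \<notin> f - {n} \<and> E1 = T n B' e' (insert s (f - {n})))"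
          using hyper[OF f0, of B1 e1 L1 "e1 n = e1' n"] unfolding E1_def A0_def by simp
        have H2: "E2 = {} \<or> E2 = G0 \<or> (\<exists>s B' e'. s < n \<and> s \<notin> g - {n} \<and> E2 = T n B' e' (insert s (g - {n})))"
          using hyper[OF g0, of B2 e2 L2 "e2 n = e2' n"] unfolding E2_def G0_def by simp
        have cf1: "card (f - {n}) + 1 = card f" using card_Suc_Diff1[OF ff(1) nf] by linarith
        have cg1: "card (g - {n}) + 1 = card g" using card_Suc_Diff1[OF ff(2) ng] by linarith
        show ?thesis
        proof (cases "E1 = {}")
          case True
          then show ?thesis using AAeq by blast
        next
          case E1ne: False
          then have E2ne: "E2 \<noteq> {}" using EE by simp
          from H1 E1ne show ?thesis
          proof (elim disjE exE conjE)
            assume E1: "E1 = A0"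
            from H2 E2ne show ?thesis
            proof (elim disjE exE conjE)
              assume "E2 = G0"
              then have "f - {n} = g - {n}" using T_unique[OF f0 g0] E1 EE unfolding A0_def G0_def by blast
              then have "f = g" using nf ng by blast
              then show ?thesis using L1[OF ff c] by simp
            next
              fix s B' e' assume s: "s < n" "s \<notin> g - {n}" "E2 = T n B' e' (insert s (g - {n}))"
              have sg: "insert s (g - {n}) \<subseteq> {..<n}" using s g0 by auto
              have "f - {n} = insert s (g - {n})" using T_unique[OF f0 sg] E1 EE s(3) unfolding A0_def by blast
              then have "card (f - {n}) = card (g - {n}) + 1" using s ff by simp
              then show ?thesis using cf1 cg1 c by simp
            qed simp
          next
            fix s B' e' assume s: "s < n" "s \<notin> f - {n}" "E1 = T n B' e' (insert s (f - {n}))"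
            have sf: "insert s (f - {n}) \<subseteq> {..<n}" using s f0 by auto
            have cs: "card (insert s (f - {n})) = card (f - {n}) + 1" using s ff by simp
            from H2 E2ne show ?thesis
            proof (elim disjE exE conjE)
              assume "E2 = G0"
              then have "insert s (f - {n}) = g - {n}" using T_unique[OF sf g0] s(3) EE unfolding G0_def by blast
              then show ?thesis using cs cf1 cg1 c by simp
            next
              fix s' B'' e'' assume s': "s' < n" "s' \<notin> g - {n}" "E2 = T n B'' e'' (insert s' (g - {n}))"
              have sg: "insert s' (g - {n}) \<subseteq> {..<n}" using s' g0 by auto
              have "insert s (f - {n}) = insert s' (g - {n})" using T_unique[OF sf sg] s(3) s'(3) EE by blast
              then show ?thesis using L3[OF ff nf ng c] L1[OF ff c] by blast
            qed simp
          qed simp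
        qed
      qed
    next
      case ng: False
      show ?thesis using Case1[OF f g nf ng c eq] .
    qed
  next
    case nf: False
    show ?thesis
    proof (cases "n \<in> g")
      case ng: True
      have "T (Suc n) B2 e2 g = T (Suc n) B2' e2' g \<or> Q g f"
        using Case1[OF g f ng nf c[symmetric], of B2 e2 B2' e2' B1 e1 B1' e1'] eq by simp
      then show ?thesis
      proof
        assume "T (Suc n) B2 e2 g = T (Suc n) B2' e2' g"
        then have "sdiff (T (Suc n) B1 e1 f) (T (Suc n) B1' e1' f) = {}" using eq unfolding sdiff_def by simp
        then show ?thesis unfolding sdiff_def by blast
      next
        assume "Q g f"
        then show ?thesis using Q_sym c by metis
      qed
    next
      case ng: False
      have fn: "f - {n} = f" "g - {n} = g" using nf ng by auto
      have "A0 = A0' \<or> Q f g" using Suc.IH[OF f0 g0 cd] red nf ng fn unfolding A0_def A0'_def G0_def G0'_def by simp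
      then show ?thesis
      proof
        assume AA: "A0 = A0'"
        have "T (Suc n) B1 e1 f = T (Suc n) B1' e1' f"
        proof (rule set_eq_split[of _ n])
          fix Y assume Y: "Y \<subseteq> {..<n}"
          show "(Y \<in> T (Suc n) B1 e1 f \<longleftrightarrow> Y \<in> T (Suc n) B1' e1' f) \<and> (insert n Y \<in> T (Suc n) B1 e1 f \<longleftrightarrow> insert n Y \<in> T (Suc n) B1' e1' f)"
            using mem_lo[OF f Y] mem_hi[OF f Y] AA nf unfolding A0_def A0'_def by auto
        qed (auto dest: T_sub)
        then show ?thesis by blast
      qed blast
    qed
  qed
qed



definition ev :: "rpoly \<Rightarrow> nat set \<Rightarrow> bool" where
  "ev p X = odd (card {S \<in> p. S \<subseteq> X})"

lemma ev_radd: "finite p \<Longrightarrow> finite q \<Longrightarrow> ev (radd p q) X = (ev p X \<noteq> ev q X)"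
proof -
  assume fp: "finite p" and fq: "finite q"
  have "{S \<in> radd p q. S \<subseteq> X} = sdiff {S \<in> p. S \<subseteq> X} {S \<in> q. S \<subseteq> X}"
    unfolding radd_def sdiff_def by auto
  then show ?thesis unfolding ev_def using odd_card_sd[of "{S \<in> p. S \<subseteq> X}" "{S \<in> q. S \<subseteq> X}"] fp fq by simp
qed

lemma odd_sum: "finite I \<Longrightarrow> odd (\<Sum>i\<in>I. (h i :: nat)) = odd (card {i \<in> I. odd (h i)})"
proof (induction I rule: finite_induct)
  case empty
  then show ?case by simp
next
  case (insert x F)
  have "{i \<in> insert x F. odd (h i)} = (if odd (h x) then insert x {i \<in> F. odd (h i)} else {i \<in> F. odd (h i)})"
    by auto
  moreover have "finite {i \<in> F. odd (h i)}" using insert by auto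
  moreover have "x \<notin> {i \<in> F. odd (h i)}" using insert.hyps(2) by blast
  ultimately have "card {i \<in> insert x F. odd (h i)} = (if odd (h x) then Suc (card {i \<in> F. odd (h i)}) else card {i \<in> F. odd (h i)})"
    using insert.hyps by (cases "odd (h x)") (simp_all add: card_insert_disjoint)
  then show ?case using insert by simp
qed

lemma rmul_sub_img: "rmul p q \<subseteq> (\<lambda>(A, B). A \<union> B) ` (p \<times> q)"
proof
  fix S assume "S \<in> rmul p q"
  then have "odd (card {(A, B). A \<in> p \<and> B \<in> q \<and> A \<union> B = S})" unfolding rmul_def by simp
  then have "{(A, B). A \<in> p \<and> B \<in> q \<and> A \<union> B = S} \<noteq> {}" by (intro notI) simp
  then obtain A B where "A \<in> p" "B \<in> q" "A \<union> B = S" by blast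
  then show "S \<in> (\<lambda>(A, B). A \<union> B) ` (p \<times> q)" by force
qed

lemma rmul_finite: "finite p \<Longrightarrow> finite q \<Longrightarrow> finite (rmul p q)"
  using rmul_sub_img finite_subset by (metis finite_SigmaI finite_imageI)

lemma rmul_Pow: "p \<subseteq> Pow M \<Longrightarrow> q \<subseteq> Pow M \<Longrightarrow> rmul p q \<subseteq> Pow M"
  using rmul_sub_img by fastforce

lemma ev_rmul:
  assumes fp: "finite p" and fq: "finite q"
  shows "ev (rmul p q) X = (ev p X \<and> ev q X)"
proof -
  define P where "P = {A \<in> p. A \<subseteq> X} \<times> {B \<in> q. B \<subseteq> X}"
  define F where "F S = {(A, B). A \<in> p \<and> B \<in> q \<and> A \<union> B = S}" for S
  define U where "U = (\<lambda>(A, B). A \<union> B) ` P"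
  have fP: "finite P" unfolding P_def using fp fq by simp
  have fU: "finite U" unfolding U_def using fP by simp
  have fF: "finite (F S)" for S
  proof -
    have "F S \<subseteq> p \<times> q" unfolding F_def by auto
    then show ?thesis using fp fq finite_subset by blast
  qed
  have PU: "P = (\<Union>S\<in>U. F S)"
  proof
    show "P \<subseteq> (\<Union>S\<in>U. F S)"
    proof
      fix x assume x: "x \<in> P"
      then obtain A B where AB: "x = (A, B)" by (cases x) auto
      then have "A \<union> B \<in> U" unfolding U_def using x by force
      moreover have "x \<in> F (A \<union> B)" using x AB unfolding F_def P_def by auto
      ultimately show "x \<in> (\<Union>S\<in>U. F S)" by blast
    qed
  next
    show "(\<Union>S\<in>U. F S) \<subseteq> P"
    proof
      fix x assume "x \<in> (\<Union>S\<in>U. F S)"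
      then obtain S where S: "S \<in> U" "x \<in> F S" by blast
      then have "S \<subseteq> X" unfolding U_def P_def by auto
      then show "x \<in> P" using S(2) unfolding F_def P_def by auto
    qed
  qed
  have "card P = (\<Sum>S\<in>U. card (F S))"
    unfolding PU using fU fF by (intro card_UN_disjoint) (auto simp: F_def)
  then have oP: "odd (card P) = odd (card {S \<in> U. odd (card (F S))})" using odd_sum[OF fU] by simp
  have eqS: "{S \<in> U. odd (card (F S))} = {S \<in> rmul p q. S \<subseteq> X}"
  proof
    show "{S \<in> U. odd (card (F S))} \<subseteq> {S \<in> rmul p q. S \<subseteq> X}"
      unfolding U_def P_def F_def rmul_def by auto
  next
    show "{S \<in> rmul p q. S \<subseteq> X} \<subseteq> {S \<in> U. odd (card (F S))}"
    proof
      fix S assume S: "S \<in> {S \<in> rmul p q. S \<subseteq> X}"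
      then have o: "odd (card (F S))" unfolding rmul_def F_def by simp
      then have "F S \<noteq> {}" by (intro notI) simp
      then obtain A B where AB: "A \<in> p" "B \<in> q" "A \<union> B = S" unfolding F_def by blast
      then have "(A, B) \<in> P" using S unfolding P_def by auto
      then have "S \<in> U" unfolding U_def using AB(3) by force
      then show "S \<in> {S \<in> U. odd (card (F S))}" using o by simp
    qed
  qed
  have "card P = card {A \<in> p. A \<subseteq> X} * card {B \<in> q. B \<subseteq> X}" unfolding P_def by (simp add: card_cartesian_product)
  then show ?thesis unfolding ev_def using oP eqS by simp
qed

lemma ev_single: "ev {S} X = (S \<subseteq> X)"
proof -
  have "{T \<in> {S}. T \<subseteq> X} = (if S \<subseteq> X then {S} else {})" by auto
  then show ?thesis unfolding ev_def by simp
qed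

lemma rprod:
  "(\<And>p. p \<in> set ps \<Longrightarrow> finite p \<and> p \<subseteq> Pow M) \<Longrightarrow>
   finite (rprod_list ps) \<and> rprod_list ps \<subseteq> Pow M \<and> (\<forall>X. ev (rprod_list ps) X = (\<forall>p\<in>set ps. ev p X))"
proof (induction ps)
  case Nil
  have "ev rone X" for X unfolding rone_def using ev_single[of "{}" X] by simp
  then show ?case unfolding rprod_list_def rone_def by (auto simp: rone_def)
next
  case (Cons p ps)
  have r: "rprod_list (p # ps) = rmul p (rprod_list ps)" unfolding rprod_list_def by simp
  have IH: "finite (rprod_list ps) \<and> rprod_list ps \<subseteq> Pow M \<and> (\<forall>X. ev (rprod_list ps) X = (\<forall>p\<in>set ps. ev p X))"
    using Cons by simp
  have p: "finite p" "p \<subseteq> Pow M" using Cons.prems by auto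
  show ?case unfolding r using IH p rmul_finite[OF p(1)] rmul_Pow[OF p(2)] ev_rmul[OF p(1)] by auto
qed

lemma radd_disj: "p \<inter> q = {} \<Longrightarrow> radd p q = p \<union> q"
  unfolding radd_def by auto

lemma ev_singletons: "finite K \<Longrightarrow> ev ((\<lambda>j. {j}) ` K) X = odd (card (K \<inter> X))"
proof -
  assume "finite K"
  have "{S \<in> (\<lambda>j. {j}) ` K. S \<subseteq> X} = (\<lambda>j. {j}) ` (K \<inter> X)" by auto
  moreover have "card ((\<lambda>j. {j}) ` (K \<inter> X)) = card (K \<inter> X)" by (intro card_image) (auto simp: inj_on_def)
  ultimately show ?thesis unfolding ev_def by simp
qed

lemma lta_var_props:
  assumes "i < m"
  shows "finite (lta_var B e i) \<and> lta_var B e i \<subseteq> Pow {..<m} \<and>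
    (\<forall>X. ev (lta_var B e i) X = (((i \<in> X) \<noteq> odd (card {j. j < i \<and> B i j \<and> j \<in> X})) \<noteq> e i))"
proof -
  define K where "K = {j. j < i \<and> B i j}"
  define C where "C = (if e i then {{}} else ({} :: nat set set))"
  have fK: "finite K" unfolding K_def by simp
  have lv: "lta_var B e i = radd (radd {{i}} ((\<lambda>j. {j}) ` K)) C"
  proof -
    have "{{j} | j. j < i \<and> B i j} = (\<lambda>j. {j}) ` K" unfolding K_def by auto
    moreover have "{{i}} \<inter> (\<lambda>j. {j}) ` K = {}" unfolding K_def by auto
    moreover have "({{i}} \<union> (\<lambda>j. {j}) ` K) \<inter> C = {}" unfolding C_def by auto
    ultimately show ?thesis unfolding lta_var_def C_def[symmetric] by (simp add: radd_disj)
  qed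
  have fC: "finite C" unfolding C_def by simp
  have evC: "ev C X = e i" for X unfolding C_def using ev_single[of "{}" X] by (simp add: ev_def)
  have KX: "K \<inter> X = {j. j < i \<and> B i j \<and> j \<in> X}" for X unfolding K_def by auto
  have ev: "ev (lta_var B e i) X = (((i \<in> X) \<noteq> odd (card {j. j < i \<and> B i j \<and> j \<in> X})) \<noteq> e i)" for X
  proof -
    have f1: "finite (radd {{i}} ((\<lambda>j. {j}) ` K))" unfolding radd_def using fK by simp
    have "ev (lta_var B e i) X = (ev (radd {{i}} ((\<lambda>j. {j}) ` K)) X \<noteq> ev C X)"
      unfolding lv using ev_radd[OF f1 fC] .
    also have "ev (radd {{i}} ((\<lambda>j. {j}) ` K)) X = (ev {{i}} X \<noteq> ev ((\<lambda>j. {j}) ` K) X)"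
      using ev_radd[of "{{i}}" "(\<lambda>j. {j}) ` K" X] fK by simp
    finally show ?thesis using evC ev_single[of "{i}" X] ev_singletons[OF fK, of X] KX[of X] by simp
  qed
  have "lta_var B e i \<subseteq> Pow {..<m}" unfolding lta_var_def using assms by auto
  moreover have "finite (lta_var B e i)" unfolding lv using fK fC unfolding radd_def by simp
  ultimately show ?thesis using ev by blast
qed

lemma lta_act_props:
  assumes "u \<subseteq> {..<m}"
  shows "finite (lta_act (B, e) u) \<and> lta_act (B, e) u \<subseteq> Pow {..<m} \<and>
    (\<forall>X. X \<subseteq> {..<m} \<longrightarrow> ev (lta_act (B, e) u) X = (X \<in> T m B e u))"
proof -
  have fu: "finite u" using assms fin_lt by blast
  have s: "set (map (lta_var B e) (sorted_list_of_set u)) = lta_var B e ` u" using fu by simp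
  define Ls where "Ls = map (lta_var B e) (sorted_list_of_set u)"
  have hyp: "\<And>p. p \<in> set Ls \<Longrightarrow> finite p \<and> p \<subseteq> Pow {..<m}"
    unfolding Ls_def s using lta_var_props assms by blast
  have r0: "finite (rprod_list Ls) \<and> rprod_list Ls \<subseteq> Pow {..<m} \<and> (\<forall>X. ev (rprod_list Ls) X = (\<forall>p\<in>set Ls. ev p X))"
    by (rule rprod[of Ls "{..<m}", OF hyp])
  have la: "lta_act (B, e) u = rprod_list Ls" unfolding lta_act_def Ls_def by simp
  have r: "finite (lta_act (B, e) u) \<and> lta_act (B, e) u \<subseteq> Pow {..<m} \<and>
      (\<forall>X. ev (lta_act (B, e) u) X = (\<forall>p\<in>lta_var B e ` u. ev p X))"
    using r0 unfolding la Ls_def s by simp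
  have "ev (lta_act (B, e) u) X = (X \<in> T m B e u)" if X: "X \<subseteq> {..<m}" for X
  proof -
    have "(\<forall>p\<in>lta_var B e ` u. ev p X) = (\<forall>i\<in>u. ev (lta_var B e i) X)" by simp
    also have "\<dots> = (\<forall>i\<in>u. (i \<in> X) = cf B e i X)"
    proof -
      have "ev (lta_var B e i) X = ((i \<in> X) = cf B e i X)" if "i \<in> u" for i
        using lta_var_props[of i m B e] that assms unfolding cf_def by auto
      then show ?thesis by blast
    qed
    finally show ?thesis using r X unfolding T_def by simp
  qed
  then show ?thesis using r by blast
qed

lemma ev_inj:
  assumes "p \<subseteq> Pow M" "q \<subseteq> Pow M" "finite M" "\<And>X. X \<subseteq> M \<Longrightarrow> ev p X = ev q X"
  shows "p = q"
proof (rule ccontr)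
  assume ne: "p \<noteq> q"
  define D where "D = sdiff p q"
  have fp: "finite p" "finite q" using assms(1,2,3) finite_subset by (metis finite_Pow_iff)+
  have fD: "finite D" unfolding D_def sdiff_def using fp by simp
  have "D \<noteq> {}" using ne unfolding D_def sdiff_def by auto
  then obtain S0 where "S0 \<in> D" by blast
  obtain S where S: "S \<in> D" "\<forall>T\<in>D. T \<subseteq> S \<longrightarrow> T = S"
    using finite_has_minimal[OF fD \<open>D \<noteq> {}\<close>] by auto
  have SM: "S \<subseteq> M" using S(1) assms(1,2) unfolding D_def sdiff_def by auto
  have "{T \<in> D. T \<subseteq> S} = {S}" using S by auto
  then have "ev D S" unfolding ev_def by simp
  moreover have "D = radd p q" unfolding D_def sdiff_def radd_def by simp
  ultimately have "ev p S \<noteq> ev q S" using ev_radd[OF fp] by simp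
  then show False using assms(4)[OF SM] by simp
qed



lemma mem_radd: "x \<in> radd p q \<longleftrightarrow> (x \<in> p) \<noteq> (x \<in> q)"
  unfolding radd_def by auto

lemma radd_cancel: "radd a b = radd a c \<Longrightarrow> b = c"
proof (rule set_eqI)
  fix x assume "radd a b = radd a c"
  then have "x \<in> radd a b \<longleftrightarrow> x \<in> radd a c" by simp
  then show "x \<in> b \<longleftrightarrow> x \<in> c" unfolding mem_radd by blast
qed

lemma orbit_elem:
  assumes "a \<in> orbit m f"
  obtains B e where "a = lta_act (B, e) f"
proof -
  from assms obtain Be where "a = lta_act Be f" unfolding orbit_def by blast
  moreover obtain B e where "Be = (B, e)" by (cases Be)
  ultimately show ?thesis using that by blast
qed

lemma orbit_inj:
  assumes fs: "f \<subseteq> {..<m}" and gs: "g \<subseteq> {..<m}" and c: "card f = card g" and nQ: "\<not> Q f g"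
    and a: "a \<in> orbit m f" "a' \<in> orbit m f" and b: "b \<in> orbit m g" "b' \<in> orbit m g"
    and eq: "radd a b = radd a' b'"
  shows "a = a' \<and> b = b'"
proof -
  obtain B1 e1 where a1: "a = lta_act (B1, e1) f" using a(1) by (rule orbit_elem)
  obtain B1' e1' where a2: "a' = lta_act (B1', e1') f" using a(2) by (rule orbit_elem)
  obtain B2 e2 where b1: "b = lta_act (B2, e2) g" using b(1) by (rule orbit_elem)
  obtain B2' e2' where b2: "b' = lta_act (B2', e2') g" using b(2) by (rule orbit_elem)
  note P1 = lta_act_props[OF fs, of B1 e1] and P2 = lta_act_props[OF fs, of B1' e1']
    and P3 = lta_act_props[OF gs, of B2 e2] and P4 = lta_act_props[OF gs, of B2' e2']
  have ptw: "((X \<in> T m B1 e1 f) \<noteq> (X \<in> T m B2 e2 g)) = ((X \<in> T m B1' e1' f) \<noteq> (X \<in> T m B2' e2' g))"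
    if X: "X \<subseteq> {..<m}" for X
  proof -
    have "ev (radd a b) X = ev (radd a' b') X" using eq by simp
    then show ?thesis using ev_radd P1 P2 P3 P4 X unfolding a1 a2 b1 b2 by metis
  qed
  have "sdiff (T m B1 e1 f) (T m B1' e1' f) = sdiff (T m B2 e2 g) (T m B2' e2' g)"
  proof (rule set_eq_lt[of _ m])
    fix Y assume Y: "Y \<subseteq> {..<m}"
    show "Y \<in> sdiff (T m B1 e1 f) (T m B1' e1' f) \<longleftrightarrow> Y \<in> sdiff (T m B2 e2 g) (T m B2' e2' g)"
      using ptw[OF Y] by auto
  qed (auto simp: sdiff_def dest: T_sub)
  then have AA: "T m B1 e1 f = T m B1' e1' f" using Main[OF fs gs c] nQ by blast
  have "a = a'"
  proof (rule ev_inj[of a "{..<m}" a'])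
    show "a \<subseteq> Pow {..<m}" "a' \<subseteq> Pow {..<m}" using P1 P2 unfolding a1 a2 by blast+
    show "finite {..<m}" by simp
    fix X assume X: "X \<subseteq> {..<m}"
    show "ev a X = ev a' X" using P1 P2 X AA unfolding a1 a2 by simp
  qed
  moreover have "b = b'" using eq radd_cancel \<open>a = a'\<close> by blast
  ultimately show ?thesis by blast
qed

theorem theorem7:
  fixes m r :: nat and I :: "monomial set" and f g :: monomial
  assumes "decreasing m I"
    and "r = Max (card ` I)"
    and "f \<in> I" and "g \<in> I" and "card f = r" and "card g = r"
    and "(\<exists>a b. a < b \<and> a \<in> (f - g) \<union> (g - f) \<and> b \<in> (f - g) \<union> (g - f)
              \<and> (\<forall>c \<in> (f - g) \<union> (g - f). c \<le> a \<or> c = b)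
              \<and> ({a, b} \<subseteq> f \<or> {a, b} \<subseteq> g))
         \<or> card (f \<inter> g) + 2 < r"
  shows "card (sumset (orbit m f) (orbit m g)) = card (orbit m f) * card (orbit m g)"
proof -
  have Is: "I \<subseteq> Pow {..<m}" using assms(1) unfolding decreasing_def monomials_def by blast
  have fs: "f \<subseteq> {..<m}" and gs: "g \<subseteq> {..<m}" using Is assms(3,4) by auto
  have c: "card f = card g" using assms(5,6) by simp
  have nQ: "\<not> Q f g" using assms(7) assms(5) unfolding Q_def cond1_def by simp
  have ss: "sumset (orbit m f) (orbit m g) = (\<lambda>(a, b). radd a b) ` (orbit m f \<times> orbit m g)"
    unfolding sumset_def by auto
  have inj: "inj_on (\<lambda>(a, b). radd a b) (orbit m f \<times> orbit m g)"
  proof (rule inj_onI)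
    fix x y assume x: "x \<in> orbit m f \<times> orbit m g" and y: "y \<in> orbit m f \<times> orbit m g"
      and e: "(\<lambda>(a, b). radd a b) x = (\<lambda>(a, b). radd a b) y"
    obtain a b where ab: "x = (a, b)" by (cases x)
    obtain a' b' where ab': "y = (a', b')" by (cases y)
    show "x = y" using orbit_inj[OF fs gs c nQ, of a a' b b'] x y e unfolding ab ab' by auto
  qed
  show ?thesis unfolding ss using card_image[OF inj] by (simp add: card_cartesian_product)
qed


end
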